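(* Let $\mathbf{k}$ be a field and let $\mathfrak{B}=\mathbf{k}\langle g,x\rangle$ be the free algebra on $g,x$, made into a bialgebra by $\Delta(g)=g\otimes g$, $\Delta(x)=x\otimes 1+g\otimes x$, $\varepsilon(g)=1$, $\varepsilon(x)=0$. For integers $k,l\ge 0$ let $C_{k,l}$ be the sum of all monomials in $g,x$ containing exactly $k$ letters $g$ and $l$ letters $x$ (so $C_{0,0}=1$), and set $C_{k,l}=0$ if $k<0$ or $l<0$. Then for all integers $i,j\ge0$ and $n\ge1$, \[ (g^ix^j)^{[n+1]}=\sum_{\substack{k_1,\dots,k_n\ge 0\\ k_1+\cdots+k_n\le j}} g^iC_{k_1+\cdots+k_n,\,j-(k_1+\cdots+k_n)}\,g^iC_{k_1+\cdots+k_{n-1},\,k_n}\cdots g^iC_{k_1,k_2}\,g^iC_{0,k_1}. \]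
   Context: For an element $h$ of a bialgebra with multiplication $m$ and comultiplication $\Delta$, the $m$-th Sweedler power is $h^{[m]}=m^{(m)}\circ\Delta^{(m)}(h)$ for $m\ge1$, where $\Delta^{(1)}=\mathrm{id}$, $\Delta^{(m)}=(\Delta^{(m-1)}\otimes\mathrm{id})\circ\Delta$ for $m\ge2$, and $m^{(m)}(h_1\otimes\cdots\otimes h_m)=h_1\cdots h_m$. *)

theory Defs
  imports "HOL-Library.Poly_Mapping"
begin

text \<open>The m-fold tensor power
  B^{(x)m} has basis the m-tuples of monomials, represented as word lists of length m.\<close>

datatype letter = G | X

type_synonym word = "letter list"
type_synonym 'k fa = "word \<Rightarrow>\<^sub>0 'k"
type_synonym 'k tens = "word list \<Rightarrow>\<^sub>0 'k"

definition fa_mult :: "'k::comm_ring_1 fa \<Rightarrow> 'k fa \<Rightarrow> 'k fa" where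
  "fa_mult p q = (\<Sum>u\<in>Poly_Mapping.keys p. \<Sum>v\<in>Poly_Mapping.keys q.
      Poly_Mapping.single (u @ v) (Poly_Mapping.lookup p u * Poly_Mapping.lookup q v))"

definition fa_one :: "'k::comm_ring_1 fa" where
  "fa_one = Poly_Mapping.single [] 1"

definition fa_mono :: "word \<Rightarrow> 'k::comm_ring_1 fa" where
  "fa_mono w = Poly_Mapping.single w 1"

definition fa_gen :: "letter \<Rightarrow> 'k::comm_ring_1 fa" where
  "fa_gen a = Poly_Mapping.single [a] 1"

definition fa_pow :: "'k::comm_ring_1 fa \<Rightarrow> nat \<Rightarrow> 'k fa" where
  "fa_pow p n = (fa_mult p ^^ n) fa_one"

definition fa_prod_list :: "'k::comm_ring_1 fa list \<Rightarrow> 'k fa" where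
  "fa_prod_list ps = foldr fa_mult ps fa_one"

definition tens_mult :: "'k::comm_ring_1 tens \<Rightarrow> 'k tens \<Rightarrow> 'k tens" where
  "tens_mult s t = (\<Sum>u\<in>Poly_Mapping.keys s. \<Sum>v\<in>Poly_Mapping.keys t.
      Poly_Mapping.single (map2 (@) u v) (Poly_Mapping.lookup s u * Poly_Mapping.lookup t v))"

definition tens_one :: "nat \<Rightarrow> 'k::comm_ring_1 tens" where
  "tens_one m = Poly_Mapping.single (replicate m []) 1"

fun Delta_gen :: "letter \<Rightarrow> 'k::comm_ring_1 tens" where
  "Delta_gen G = Poly_Mapping.single [[G],[G]] 1"
| "Delta_gen X = Poly_Mapping.single [[X],[]] 1 + Poly_Mapping.single [[G],[X]] 1"

definition Delta_word :: "word \<Rightarrow> 'k::comm_ring_1 tens" where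
  "Delta_word w = foldr (\<lambda>a acc. tens_mult (Delta_gen a) acc) w (tens_one 2)"

definition Delta :: "'k::comm_ring_1 fa \<Rightarrow> 'k tens" where
  "Delta h = (\<Sum>w\<in>Poly_Mapping.keys h. \<Sum>u\<in>Poly_Mapping.keys (Delta_word w :: 'k tens).
      Poly_Mapping.single u (Poly_Mapping.lookup h w * Poly_Mapping.lookup (Delta_word w) u))"

text \<open>Iterated comultiplication Delta^(1) = id, Delta^(m) = (Delta^(m-1) (x) id) o Delta.
  (Delta^(0) is not used; it is set to 0.)\<close>
fun Delta_iter :: "nat \<Rightarrow> 'k::comm_ring_1 fa \<Rightarrow> 'k tens" where
  "Delta_iter 0 h = 0"
| "Delta_iter (Suc 0) h = (\<Sum>w\<in>Poly_Mapping.keys h. Poly_Mapping.single [w] (Poly_Mapping.lookup h w))"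
| "Delta_iter (Suc (Suc m)) h =
     (\<Sum>u\<in>Poly_Mapping.keys (Delta h). \<Sum>v\<in>Poly_Mapping.keys (Delta_iter (Suc m) (fa_mono (u ! 0))).
        Poly_Mapping.single (v @ [u ! 1])
          (Poly_Mapping.lookup (Delta h) u * Poly_Mapping.lookup (Delta_iter (Suc m) (fa_mono (u ! 0))) v))"

definition mult_iter :: "'k::comm_ring_1 tens \<Rightarrow> 'k fa" where
  "mult_iter t = (\<Sum>v\<in>Poly_Mapping.keys t. Poly_Mapping.single (concat v) (Poly_Mapping.lookup t v))"

definition sweedler :: "nat \<Rightarrow> 'k::comm_ring_1 fa \<Rightarrow> 'k fa" where
  "sweedler m h = mult_iter (Delta_iter m h)"

definition Cs :: "nat \<Rightarrow> nat \<Rightarrow> 'k::comm_ring_1 fa" where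
  "Cs k l = (\<Sum>w\<in>{w. count_list w G = k \<and> count_list w X = l}. Poly_Mapping.single w 1)"

end

theory Submission
  imports Defs
begin

lemma phi_sum:
  assumes "\<And>u a b. \<phi> u (a + b) = \<phi> u a + \<phi> u b" "\<And>u. \<phi> u 0 = (0::'c::comm_monoid_add)"
  shows "\<phi> u (sum \<beta> C) = (\<Sum>c\<in>C. \<phi> u (\<beta> c))"
  by (induction C rule: infinite_finite_induct) (auto simp: assms)

lemma lin:
  fixes p :: "'a \<Rightarrow>\<^sub>0 'b::comm_monoid_add"
  assumes fin: "finite C" and p: "p = (\<Sum>c\<in>C. Poly_Mapping.single (f c) (\<alpha> c))"
    and add: "\<And>u a b. \<phi> u (a + b) = \<phi> u a + \<phi> u b" and z: "\<And>u. \<phi> u 0 = (0::'c::comm_monoid_add)"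
  shows "(\<Sum>u\<in>Poly_Mapping.keys p. \<phi> u (Poly_Mapping.lookup p u)) = (\<Sum>c\<in>C. \<phi> (f c) (\<alpha> c))"
proof -
  have lk: "Poly_Mapping.lookup p u = (\<Sum>c\<in>{c\<in>C. f c = u}. \<alpha> c)" for u
    unfolding p lookup_sum lookup_single when_def using fin
    by (simp add: sum.inter_filter[symmetric] if_distrib cong: if_cong)
  have ks: "Poly_Mapping.keys p \<subseteq> f ` C"
  proof
    fix u assume "u \<in> Poly_Mapping.keys p"
    hence "Poly_Mapping.lookup p u \<noteq> 0" by (simp add: in_keys_iff)
    hence "{c\<in>C. f c = u} \<noteq> {}" using lk[of u] by (metis (no_types, lifting) sum.empty)
    thus "u \<in> f ` C" by auto
  qed
  have "(\<Sum>u\<in>Poly_Mapping.keys p. \<phi> u (Poly_Mapping.lookup p u)) =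
        (\<Sum>u\<in>f ` C. \<phi> u (Poly_Mapping.lookup p u))"
    by (rule sum.mono_neutral_left) (use fin ks z in \<open>auto simp: in_keys_iff\<close>)
  also have "\<dots> = (\<Sum>u\<in>f ` C. \<Sum>c\<in>{c\<in>C. f c = u}. \<phi> u (\<alpha> c))"
    unfolding lk by (rule sum.cong[OF refl], rule phi_sum[where \<phi>=\<phi>, OF add z])
  also have "\<dots> = (\<Sum>u\<in>f ` C. \<Sum>c\<in>{c\<in>C. f c = u}. \<phi> (f c) (\<alpha> c))"
    by (rule sum.cong) (auto)
  also have "\<dots> = (\<Sum>c\<in>C. \<phi> (f c) (\<alpha> c))"
    using sum.image_gen[OF fin, of "\<lambda>c. \<phi> (f c) (\<alpha> c)" f] by simp
  finally show ?thesis .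
qed

lemma bilin:
  fixes p q :: "_ \<Rightarrow>\<^sub>0 'k::comm_ring_1"
  assumes fC: "finite C" and fD: "finite D"
    and p: "p = (\<Sum>c\<in>C. Poly_Mapping.single (f c) 1)" and q: "q = (\<Sum>d\<in>D. Poly_Mapping.single (g d) 1)"
  shows "(\<Sum>u\<in>Poly_Mapping.keys p. \<Sum>v\<in>Poly_Mapping.keys q.
           Poly_Mapping.single (opr u v) (Poly_Mapping.lookup p u * Poly_Mapping.lookup q v))
       = (\<Sum>c\<in>C. \<Sum>d\<in>D. Poly_Mapping.single (opr (f c) (g d)) 1)"
proof -
  have "(\<Sum>u\<in>Poly_Mapping.keys p. \<Sum>v\<in>Poly_Mapping.keys q.
           Poly_Mapping.single (opr u v) (Poly_Mapping.lookup p u * Poly_Mapping.lookup q v))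
      = (\<Sum>c\<in>C. \<Sum>v\<in>Poly_Mapping.keys q.
           Poly_Mapping.single (opr (f c) v) (1 * Poly_Mapping.lookup q v))"
    by (rule lin[OF fC p, where \<phi>="\<lambda>u a. \<Sum>v\<in>Poly_Mapping.keys q.
           Poly_Mapping.single (opr u v) (a * Poly_Mapping.lookup q v)"])
       (simp_all add: single_add distrib_right sum.distrib)
  also have "\<dots> = (\<Sum>c\<in>C. \<Sum>d\<in>D. Poly_Mapping.single (opr (f c) (g d)) 1)"
  proof (rule sum.cong[OF refl])
    fix c
    show "(\<Sum>v\<in>Poly_Mapping.keys q. Poly_Mapping.single (opr (f c) v) (1 * Poly_Mapping.lookup q v))
          = (\<Sum>d\<in>D. Poly_Mapping.single (opr (f c) (g d)) 1)"
      using lin[OF fD q, where \<phi>="\<lambda>v a. Poly_Mapping.single (opr (f c) v) (1 * a)"]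
      by (simp add: single_add)
  qed
  finally show ?thesis .
qed

lemma repr_self:
  fixes p :: "_ \<Rightarrow>\<^sub>0 'k::comm_ring_1"
  assumes fC: "finite C" and p: "p = (\<Sum>c\<in>C. Poly_Mapping.single (f c) 1)"
  shows "(\<Sum>u\<in>Poly_Mapping.keys p. Poly_Mapping.single (h u) (Poly_Mapping.lookup p u))
       = (\<Sum>c\<in>C. Poly_Mapping.single (h (f c)) 1)"
  using lin[OF fC p, where \<phi>="\<lambda>u a. Poly_Mapping.single (h u) a"] by (simp add: single_add)

lemma fa_mult_sums:
  assumes "finite C" "finite D"
  shows "fa_mult (\<Sum>c\<in>C. Poly_Mapping.single (f c) 1) (\<Sum>d\<in>D. Poly_Mapping.single (g d) 1)
       = (\<Sum>c\<in>C. \<Sum>d\<in>D. Poly_Mapping.single (f c @ g d) (1::'k::comm_ring_1))"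
  unfolding fa_mult_def by (rule bilin[OF assms refl refl])

lemma tens_mult_sums:
  assumes "finite C" "finite D"
  shows "tens_mult (\<Sum>c\<in>C. Poly_Mapping.single (f c) 1) (\<Sum>d\<in>D. Poly_Mapping.single (g d) 1)
       = (\<Sum>c\<in>C. \<Sum>d\<in>D. Poly_Mapping.single (map2 (@) (f c) (g d)) (1::'k::comm_ring_1))"
  unfolding tens_mult_def by (rule bilin[OF assms refl refl])

lemma single_as_sum: "Poly_Mapping.single w (1::'k::comm_ring_1) = (\<Sum>c\<in>{w}. Poly_Mapping.single c 1)"
  by simp

lemma fa_mult_mono: "fa_mult (fa_mono u) (fa_mono v) = (fa_mono (u @ v) :: 'k::comm_ring_1 fa)"
  unfolding fa_mono_def by (subst (1 2) single_as_sum, subst fa_mult_sums) auto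

lemma fa_pow_gen: "fa_pow (fa_gen a) i = (fa_mono (replicate i a) :: 'k::comm_ring_1 fa)"
proof (induction i)
  case 0 thus ?case by (simp add: fa_pow_def fa_one_def fa_mono_def)
next
  case (Suc i)
  have "fa_pow (fa_gen a) (Suc i) = fa_mult (fa_gen a) (fa_pow (fa_gen a) i)"
    by (simp add: fa_pow_def)
  also have "\<dots> = (fa_mono (replicate (Suc i) a) :: 'k fa)"
    using fa_mult_mono[of "[a]" "replicate i a"] Suc by (simp add: fa_gen_def fa_mono_def)
  finally show ?case .
qed

lemma letter_neq: "(a \<noteq> X) = (a = G)" "(a \<noteq> G) = (a = X)"
  by (cases a; simp)+

fun out :: "nat \<Rightarrow> letter \<Rightarrow> nat \<Rightarrow> word" where
  "out q G p = [G]"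
| "out q X p = (if p = q then [X] else if q < p then [G] else [])"

fun Pa :: "nat \<Rightarrow> letter \<Rightarrow> nat set" where
  "Pa m G = {0}"
| "Pa m X = {..m}"

fun A :: "nat \<Rightarrow> word \<Rightarrow> nat list set" where
  "A m [] = {[]}"
| "A m (a # w) = (\<lambda>(p, ps). p # ps) ` (Pa m a \<times> A m w)"

definition T :: "nat \<Rightarrow> word \<Rightarrow> nat list \<Rightarrow> word list" where
  "T m w ps = map (\<lambda>q. concat (map2 (out q) w ps)) [0..<Suc m]"

lemma finite_Pa: "finite (Pa m a)" by (cases a) auto

lemma finite_A: "finite (A m w)"
  by (induction w) (auto simp: finite_Pa)

lemma A_char: "ps \<in> A m w \<longleftrightarrow> length ps = length w \<and>
   (\<forall>k<length w. ps ! k \<le> m \<and> (w ! k = G \<longrightarrow> ps ! k = 0))"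
proof (induction w arbitrary: ps)
  case Nil thus ?case by auto
next
  case (Cons a w)
  show ?case
  proof
    assume "ps \<in> A m (a # w)"
    then obtain p ps' where ps: "ps = p # ps'" "p \<in> Pa m a" "ps' \<in> A m w" by auto
    thus "length ps = length (a # w) \<and>
      (\<forall>k<length (a # w). ps ! k \<le> m \<and> ((a # w) ! k = G \<longrightarrow> ps ! k = 0))"
      using Cons[of ps'] by (cases a) (auto simp: nth_Cons split: nat.splits)
  next
    assume H: "length ps = length (a # w) \<and>
      (\<forall>k<length (a # w). ps ! k \<le> m \<and> ((a # w) ! k = G \<longrightarrow> ps ! k = 0))"
    then obtain p ps' where ps: "ps = p # ps'" by (cases ps) auto
    have "p \<in> Pa m a" using H ps by (cases a) (auto dest: spec[of _ 0])
    moreover have "ps' \<in> A m w" using H ps Cons[of ps'] by (auto dest: spec[of _ "Suc k" for k])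
    ultimately show "ps \<in> A m (a # w)" using ps by auto
  qed
qed

lemma T_Cons: "T m (a # w) (p # ps) = map2 (@) (map (\<lambda>q. out q a p) [0..<Suc m]) (T m w ps)"
  unfolding T_def by (rule nth_equalityI) (simp_all del: upt_Suc)

lemma Delta_gen_repr:
  "(Delta_gen a :: 'k::comm_ring_1 tens) =
     (\<Sum>p\<in>Pa 1 a. Poly_Mapping.single (map (\<lambda>q. out q a p) [0..<Suc 1]) 1)"
proof (cases a)
  case G thus ?thesis by (simp add: upt_rec)
next
  case X
  have "{..Suc 0} = {0, 1}" by auto
  thus ?thesis using X by (simp add: upt_rec add.commute)
qed

lemma sum_Cons_reindex:
  "(\<Sum>x\<in>(\<lambda>(p, ps). p # ps) ` (P \<times> Q). h x) = (\<Sum>p\<in>P. \<Sum>ps\<in>Q. h (p # ps))"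
  if "finite P" "finite Q"
proof -
  have "inj_on (\<lambda>(p, ps). p # ps) (P \<times> Q)" by (auto simp: inj_on_def)
  hence "(\<Sum>x\<in>(\<lambda>(p, ps). p # ps) ` (P \<times> Q). h x) = (\<Sum>(p,ps)\<in>P \<times> Q. h (p # ps))"
    by (subst sum.reindex) (auto simp: case_prod_beta)
  thus ?thesis by (simp add: sum.cartesian_product)
qed

lemma Delta_word_repr:
  "(Delta_word w :: 'k::comm_ring_1 tens) = (\<Sum>ps\<in>A 1 w. Poly_Mapping.single (T 1 w ps) 1)"
proof (induction w)
  case Nil thus ?case by (simp add: Delta_word_def tens_one_def T_def numeral_2_eq_2)
next
  case (Cons a w)
  have "(Delta_word (a # w) :: 'k tens) = tens_mult (Delta_gen a) (Delta_word w)"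
    by (simp add: Delta_word_def)
  also have "\<dots> = (\<Sum>p\<in>Pa 1 a. \<Sum>ps\<in>A 1 w.
      Poly_Mapping.single (map2 (@) (map (\<lambda>q. out q a p) [0..<Suc 1]) (T 1 w ps)) 1)"
    unfolding Cons Delta_gen_repr by (rule tens_mult_sums[OF finite_Pa finite_A])
  also have "\<dots> = (\<Sum>ps\<in>A 1 (a # w). Poly_Mapping.single (T 1 (a # w) ps) 1)"
    by (simp add: sum_Cons_reindex finite_Pa finite_A T_Cons)
  finally show ?case .
qed

lemma Delta_mono_repr:
  "(Delta (fa_mono w) :: 'k::comm_ring_1 tens) = (\<Sum>ps\<in>A 1 w. Poly_Mapping.single (T 1 w ps) 1)"
proof -
  have "(Delta (fa_mono w) :: 'k tens) = (\<Sum>u\<in>Poly_Mapping.keys (Delta_word w :: 'k tens).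
      Poly_Mapping.single u (Poly_Mapping.lookup (Delta_word w :: 'k tens) u))"
    by (simp add: Delta_def fa_mono_def)
  also have "\<dots> = (\<Sum>ps\<in>A 1 w. Poly_Mapping.single (T 1 w ps) 1)"
    using repr_self[OF finite_A Delta_word_repr, where h="\<lambda>u. u"] by simp
  finally show ?thesis .
qed

definition o0 :: "letter \<Rightarrow> nat \<Rightarrow> letter" where
  "o0 a p = (if a = X \<and> p = 0 then X else G)"

lemma T1_0_aux: "ps \<in> A 1 w \<Longrightarrow> concat (map2 (out 0) w ps) = map2 o0 w ps"
proof (induction w arbitrary: ps)
  case Nil thus ?case by simp
next
  case (Cons a w)
  then obtain p ps' where "ps = p # ps'" "p \<in> Pa 1 a" "ps' \<in> A 1 w" by auto
  thus ?case using Cons.IH[of ps'] by (cases a) (auto simp: o0_def)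
qed

lemma T1_0: "ps \<in> A 1 w \<Longrightarrow> T 1 w ps ! 0 = map2 o0 w ps"
  by (simp add: T_def T1_0_aux del: upt_Suc)

lemma T1_1: "T 1 w ps ! 1 = concat (map2 (out 1) w ps)"
  by (simp add: T_def)

lemma length_T: "length (T m w ps) = Suc m" by (simp add: T_def)

lemma A0: "A 0 w = {map (\<lambda>_. 0) w}"
proof (induction w)
  case (Cons a w) thus ?case by (cases a) auto
qed simp

lemma T0: "T 0 w (map (\<lambda>_. 0) w) = [w]"
proof -
  have "concat (map2 (out 0) w (map (\<lambda>_. 0) w)) = w"
  proof (induction w)
    case (Cons a w) thus ?case by (cases a) auto
  qed simp
  thus ?thesis by (simp add: T_def)
qed

lemma map2_eq_nth:
  assumes "length a = n" "length b = n" "length c = n" "length d = n"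
    "\<And>k. k < n \<Longrightarrow> f (a ! k) (b ! k) = g (c ! k) (d ! k)"
  shows "map2 f a b = map2 g c d"
  using assms by (simp add: list_eq_iff_nth_eq)

definition comb :: "nat \<Rightarrow> nat \<Rightarrow> nat \<Rightarrow> nat" where
  "comb m p q = (if p = 1 then Suc m else q)"

lemma T_step:
  assumes ps: "ps \<in> A 1 w" and qs: "qs \<in> A m (map2 o0 w ps)"
  shows "T (Suc m) w (map2 (comb m) ps qs) = T m (map2 o0 w ps) qs @ [T 1 w ps ! 1]"
proof -
  have lp: "length ps = length w" and lq: "length qs = length w"
    using ps qs by (auto simp: A_char)
  have pk: "\<And>k. k < length w \<Longrightarrow> ps ! k \<le> 1 \<and> (w ! k = G \<longrightarrow> ps ! k = 0)"
    using ps by (auto simp: A_char)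
  have qk: "\<And>k. k < length w \<Longrightarrow> qs ! k \<le> m \<and> (map2 o0 w ps ! k = G \<longrightarrow> qs ! k = 0)"
    using qs lp by (auto simp: A_char)
  have e1: "map2 (out q) w (map2 (comb m) ps qs) = map2 (out q) (map2 o0 w ps) qs" if "q \<le> m" for q
  proof (rule map2_eq_nth[where n="length w"])
    fix k assume k: "k < length w"
    show "out q (w ! k) (map2 (comb m) ps qs ! k) = out q (map2 o0 w ps ! k) (qs ! k)"
      using pk[OF k] qk[OF k] k lp lq that
      by (cases "w ! k"; cases "ps ! k") (auto simp: comb_def o0_def)
  qed (use lp lq in auto)
  have e2: "map2 (out (Suc m)) w (map2 (comb m) ps qs) = map2 (out 1) w ps"
  proof (rule map2_eq_nth[where n="length w"])
    fix k assume k: "k < length w"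
    show "out (Suc m) (w ! k) (map2 (comb m) ps qs ! k) = out 1 (w ! k) (ps ! k)"
      using pk[OF k] qk[OF k] k lp lq
      by (cases "w ! k"; cases "ps ! k") (auto simp: comb_def o0_def)
  qed (use lp lq in auto)
  have "T (Suc m) w (map2 (comb m) ps qs) =
      map (\<lambda>q. concat (map2 (out q) w (map2 (comb m) ps qs))) [0..<Suc m]
      @ [concat (map2 (out (Suc m)) w (map2 (comb m) ps qs))]"
    by (simp add: T_def)
  also have "\<dots> = T m (map2 o0 w ps) qs @ [T 1 w ps ! 1]"
    unfolding T1_1 e2 T_def by (simp add: e1)
  finally show ?thesis .
qed

lemma DI_repr:
  "(Delta_iter (Suc m) (fa_mono w) :: 'k::comm_ring_1 tens) =
     (\<Sum>ps\<in>A m w. Poly_Mapping.single (T m w ps) 1)"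
proof (induction m arbitrary: w)
  case 0
  show ?case by (simp add: fa_mono_def A0 T0)
next
  case (Suc m)
  let ?D = "Delta (fa_mono w) :: 'k tens"
  let ?a = "\<lambda>ps. map2 o0 w ps"
  have "(Delta_iter (Suc (Suc m)) (fa_mono w) :: 'k tens) =
    (\<Sum>u\<in>Poly_Mapping.keys ?D. \<Sum>v\<in>Poly_Mapping.keys (Delta_iter (Suc m) (fa_mono (u ! 0)) :: 'k tens).
        Poly_Mapping.single (v @ [u ! 1])
          (Poly_Mapping.lookup ?D u * Poly_Mapping.lookup (Delta_iter (Suc m) (fa_mono (u ! 0)) :: 'k tens) v))"
    by simp
  also have "\<dots> = (\<Sum>ps\<in>A 1 w. \<Sum>v\<in>Poly_Mapping.keys (Delta_iter (Suc m) (fa_mono (T 1 w ps ! 0)) :: 'k tens).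
        Poly_Mapping.single (v @ [T 1 w ps ! 1])
          (1 * Poly_Mapping.lookup (Delta_iter (Suc m) (fa_mono (T 1 w ps ! 0)) :: 'k tens) v))"
    by (rule lin[OF finite_A Delta_mono_repr, where \<phi>="\<lambda>u a. \<Sum>v\<in>Poly_Mapping.keys (Delta_iter (Suc m) (fa_mono (u ! 0)) :: 'k tens).
        Poly_Mapping.single (v @ [u ! 1])
          (a * Poly_Mapping.lookup (Delta_iter (Suc m) (fa_mono (u ! 0)) :: 'k tens) v)"])
       (simp_all add: single_add distrib_right sum.distrib)
  also have "\<dots> = (\<Sum>ps\<in>A 1 w. \<Sum>qs\<in>A m (?a ps).
        Poly_Mapping.single (T m (?a ps) qs @ [T 1 w ps ! 1]) (1::'k))"
  proof (rule sum.cong[OF refl])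
    fix ps assume ps: "ps \<in> A 1 w"
    show "(\<Sum>v\<in>Poly_Mapping.keys (Delta_iter (Suc m) (fa_mono (T 1 w ps ! 0)) :: 'k tens).
        Poly_Mapping.single (v @ [T 1 w ps ! 1])
          (1 * Poly_Mapping.lookup (Delta_iter (Suc m) (fa_mono (T 1 w ps ! 0)) :: 'k tens) v))
      = (\<Sum>qs\<in>A m (?a ps). Poly_Mapping.single (T m (?a ps) qs @ [T 1 w ps ! 1]) (1::'k))"
      unfolding T1_0[OF ps] using repr_self[OF finite_A Suc.IH, where h="\<lambda>v. v @ [T 1 w ps ! 1]"]
      by simp
  qed
  also have "\<dots> = (\<Sum>(ps, qs)\<in>Sigma (A 1 w) (\<lambda>ps. A m (?a ps)).
        Poly_Mapping.single (T m (?a ps) qs @ [T 1 w ps ! 1]) (1::'k))"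
    by (rule sum.Sigma) (auto simp: finite_A)
  also have "\<dots> = (\<Sum>r\<in>A (Suc m) w. Poly_Mapping.single (T (Suc m) w r) 1)"
  proof (rule sum.reindex_bij_witness[where j="\<lambda>(ps, qs). map2 (comb m) ps qs"
        and i="\<lambda>r. (map (\<lambda>p. if p = Suc m then 1 else 0) r, map (\<lambda>p. if p = Suc m then 0 else p) r)"])
    fix x assume x: "x \<in> Sigma (A 1 w) (\<lambda>ps. A m (?a ps))"
    then obtain ps qs where x: "x = (ps, qs)" and ps: "ps \<in> A 1 w" and qs: "qs \<in> A m (?a ps)" by auto
    have lp: "length ps = length w" and lq: "length qs = length w"
      using ps qs by (auto simp: A_char)
    have pk: "\<And>k. k < length w \<Longrightarrow> ps ! k \<le> 1 \<and> (w ! k = G \<longrightarrow> ps ! k = 0)"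
      using ps by (auto simp: A_char)
    have qk: "\<And>k. k < length w \<Longrightarrow> qs ! k \<le> m \<and> (?a ps ! k = G \<longrightarrow> qs ! k = 0)"
      using qs lp by (auto simp: A_char)
    show "(\<lambda>r. (map (\<lambda>p. if p = Suc m then 1 else 0) r, map (\<lambda>p. if p = Suc m then 0 else p) r))
        ((\<lambda>(ps, qs). map2 (comb m) ps qs) x) = x"
    proof -
      have "map (\<lambda>p. if p = Suc m then 1 else 0) (map2 (comb m) ps qs) = ps"
        apply (rule nth_equalityI)
         apply (simp add: lp lq)
        subgoal for i using pk[of i] qk[of i] lp lq by (auto simp: comb_def o0_def)
        done
      moreover have "map (\<lambda>p. if p = Suc m then 0 else p) (map2 (comb m) ps qs) = qs"
        apply (rule nth_equalityI)
         apply (simp add: lp lq)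
        subgoal for i using pk[of i] qk[of i] lp lq by (auto simp: comb_def o0_def)
        done
      ultimately show ?thesis using x by simp
    qed
    show "(\<lambda>(ps, qs). map2 (comb m) ps qs) x \<in> A (Suc m) w"
      unfolding x A_char using lp lq pk qk by (fastforce simp: comb_def o0_def)
    show "Poly_Mapping.single (T (Suc m) w ((\<lambda>(ps, qs). map2 (comb m) ps qs) x)) 1 =
        (\<lambda>(ps, qs). Poly_Mapping.single (T m (?a ps) qs @ [T 1 w ps ! 1]) (1::'k)) x"
      using T_step[OF ps qs] x by simp
  next
    fix r assume r: "r \<in> A (Suc m) w"
    have lr: "length r = length w" and rk: "\<And>k. k < length w \<Longrightarrow> r ! k \<le> Suc m \<and> (w ! k = G \<longrightarrow> r ! k = 0)"
      using r by (auto simp: A_char)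
    show "(\<lambda>(ps, qs). map2 (comb m) ps qs)
        ((\<lambda>r. (map (\<lambda>p. if p = Suc m then 1 else 0) r, map (\<lambda>p. if p = Suc m then 0 else p) r)) r) = r"
      apply (simp, rule nth_equalityI)
       apply (simp add: lr)
      subgoal for i using rk[of i] lr by (auto simp: comb_def)
      done
    show "(\<lambda>r. (map (\<lambda>p. if p = Suc m then 1 else 0) r, map (\<lambda>p. if p = Suc m then 0 else p) r)) r
        \<in> Sigma (A 1 w) (\<lambda>ps. A m (?a ps))"
      using lr rk by (fastforce simp: A_char o0_def letter_neq)
  qed
  finally show ?case .
qed

definition fac :: "nat \<Rightarrow> nat list \<Rightarrow> word" where
  "fac q qs = concat (map (out q X) qs)"

lemma A_repG: "A m (replicate i G @ v) = (\<lambda>qs. replicate i 0 @ qs) ` A m v"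
proof (induction i)
  case 0 thus ?case by simp
next
  case (Suc i)
  show ?case by (simp add: Suc image_image image_constant_conv Setcompr_eq_image)
      (force simp: image_iff)
qed

lemma A_repX: "A m (replicate j X) = {qs. length qs = j \<and> set qs \<subseteq> {..m}}"
  by (auto simp: A_char in_set_conv_nth) (metis atMost_iff nth_mem subsetD)

lemma map2_rep: "length qs = j \<Longrightarrow> map2 f (replicate j a) qs = map (f a) qs"
  by (induction qs arbitrary: j) (auto simp: Suc_length_conv)

lemma T_w0: "length qs = j \<Longrightarrow>
  T n (replicate i G @ replicate j X) (replicate i 0 @ qs) = map (\<lambda>q. replicate i G @ fac q qs) [0..<Suc n]"
proof -
  assume l: "length qs = j"
  have g: "concat (map2 (out q) (replicate i G) (replicate i 0)) = replicate i G" for q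
    by (induction i) auto
  show ?thesis
    unfolding T_def fac_def using l
    by (simp add: g map2_rep del: upt_Suc)
qed

lemma LHS:
  "sweedler (Suc n) (fa_mult (fa_pow (fa_gen G) i) (fa_pow (fa_gen X) j) :: 'k::comm_ring_1 fa)
   = (\<Sum>qs\<in>{qs. length qs = j \<and> set qs \<subseteq> {..n}}.
        Poly_Mapping.single (concat (map (\<lambda>q. replicate i G @ fac q qs) [0..<Suc n])) 1)"
proof -
  let ?w = "replicate i G @ replicate j X"
  have "(fa_mult (fa_pow (fa_gen G) i) (fa_pow (fa_gen X) j) :: 'k fa) = fa_mono ?w"
    by (simp add: fa_pow_gen fa_mult_mono)
  hence "sweedler (Suc n) (fa_mult (fa_pow (fa_gen G) i) (fa_pow (fa_gen X) j) :: 'k fa)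
      = mult_iter (Delta_iter (Suc n) (fa_mono ?w) :: 'k tens)"
    by (simp add: sweedler_def)
  also have "\<dots> = (\<Sum>ps\<in>A n ?w. Poly_Mapping.single (concat (T n ?w ps)) 1)"
    unfolding mult_iter_def by (rule repr_self[OF finite_A DI_repr])
  also have "\<dots> = (\<Sum>qs\<in>{qs. length qs = j \<and> set qs \<subseteq> {..n}}.
        Poly_Mapping.single (concat (T n ?w (replicate i 0 @ qs))) 1)"
    unfolding A_repG A_repX by (subst sum.reindex) (auto simp: inj_on_def)
  also have "\<dots> = (\<Sum>qs\<in>{qs. length qs = j \<and> set qs \<subseteq> {..n}}.
        Poly_Mapping.single (concat (map (\<lambda>q. replicate i G @ fac q qs) [0..<Suc n])) 1)"
    by (rule sum.cong) (auto simp: T_w0 simp del: upt_Suc)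
  finally show ?thesis .
qed

fun Pr :: "('t \<Rightarrow> 'w set) \<Rightarrow> 't list \<Rightarrow> 'w list set" where
  "Pr S [] = {[]}"
| "Pr S (t # ts) = (\<lambda>(w, ws). w # ws) ` (S t \<times> Pr S ts)"

lemma finite_Pr: "(\<And>t. finite (S t)) \<Longrightarrow> finite (Pr S ts)"
  by (induction ts) auto

lemma Pr_char: "ws \<in> Pr S ts \<longleftrightarrow> length ws = length ts \<and> (\<forall>q<length ts. ws ! q \<in> S (ts ! q))"
proof (induction ts arbitrary: ws)
  case Nil thus ?case by auto
next
  case (Cons t ts)
  show ?case
  proof
    assume "ws \<in> Pr S (t # ts)"
    then obtain w ws' where "ws = w # ws'" "w \<in> S t" "ws' \<in> Pr S ts" by auto
    thus "length ws = length (t # ts) \<and> (\<forall>q<length (t # ts). ws ! q \<in> S ((t # ts) ! q))"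
      using Cons[of ws'] by (auto simp: nth_Cons split: nat.splits)
  next
    assume H: "length ws = length (t # ts) \<and> (\<forall>q<length (t # ts). ws ! q \<in> S ((t # ts) ! q))"
    then obtain w ws' where ws: "ws = w # ws'" by (cases ws) auto
    have "w \<in> S t" using H ws by (auto dest: spec[of _ 0])
    moreover have "ws' \<in> Pr S ts" using H ws Cons[of ws'] by (auto dest: spec[of _ "Suc k" for k])
    ultimately show "ws \<in> Pr S (t # ts)" using ws by auto
  qed
qed

lemma prod_list_repr:
  assumes "\<And>t. finite (S t)"
  shows "fa_prod_list (map (\<lambda>t. \<Sum>w\<in>S t. Poly_Mapping.single (h w) 1) ts)
       = (\<Sum>ws\<in>Pr S ts. Poly_Mapping.single (concat (map h ws)) (1::'k::comm_ring_1))"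
proof (induction ts)
  case Nil thus ?case by (simp add: fa_prod_list_def fa_one_def)
next
  case (Cons t ts)
  have "fa_prod_list (map (\<lambda>t. \<Sum>w\<in>S t. Poly_Mapping.single (h w) 1) (t # ts))
      = fa_mult (\<Sum>w\<in>S t. Poly_Mapping.single (h w) 1)
          (\<Sum>ws\<in>Pr S ts. Poly_Mapping.single (concat (map h ws)) (1::'k))"
    using Cons by (simp add: fa_prod_list_def)
  also have "\<dots> = (\<Sum>w\<in>S t. \<Sum>ws\<in>Pr S ts. Poly_Mapping.single (h w @ concat (map h ws)) (1::'k))"
    by (rule fa_mult_sums[OF assms finite_Pr[OF assms]])
  also have "\<dots> = (\<Sum>ws\<in>Pr S (t # ts). Poly_Mapping.single (concat (map h ws)) (1::'k))"
    by (simp add: sum_Cons_reindex assms finite_Pr)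
  finally show ?case .
qed

definition Cset :: "nat \<Rightarrow> nat \<Rightarrow> word set" where
  "Cset k l = {w. count_list w G = k \<and> count_list w X = l}"

lemma length_count: "length w = count_list w G + count_list w X"
  by (induction w) (auto simp: letter_neq)

lemma UNIV_letter: "(UNIV :: letter set) = {G, X}"
  using letter_neq by auto

lemma finite_Cset: "finite (Cset k l)"
proof -
  have "Cset k l \<subseteq> {w. set w \<subseteq> UNIV \<and> length w = k + l}"
    by (auto simp: Cset_def length_count)
  moreover have "finite {w::word. set w \<subseteq> UNIV \<and> length w = k + l}"
    by (rule finite_lists_length_eq) (simp add: UNIV_letter)
  ultimately show ?thesis by (rule finite_subset)
qed

lemma gi_Cs: "fa_mult (fa_pow (fa_gen G) i) (Cs k l) =
   (\<Sum>w\<in>Cset k l. Poly_Mapping.single (replicate i G @ w) (1::'k::comm_ring_1))"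
  unfolding fa_pow_gen fa_mono_def Cs_def Cset_def[symmetric]
  by (subst single_as_sum, subst fa_mult_sums) (auto simp: finite_Cset)

definition SS :: "nat \<Rightarrow> nat list \<Rightarrow> nat \<Rightarrow> word set" where
  "SS j ks t = Cset (sum_list (take t ks)) ((ks @ [j - sum_list ks]) ! t)"

lemma finite_K: "finite {ks::nat list. length ks = n \<and> sum_list ks \<le> j}"
proof -
  have "{ks::nat list. length ks = n \<and> sum_list ks \<le> j} \<subseteq> {ks. set ks \<subseteq> {..j} \<and> length ks = n}"
    using member_le_sum_list by fastforce
  moreover have "finite {ks::nat list. set ks \<subseteq> {..j} \<and> length ks = n}"
    by (rule finite_lists_length_eq) simp
  ultimately show ?thesis by (rule finite_subset)
qed

lemma RHS:
  "(\<Sum>ks\<in>{ks. length ks = n \<and> sum_list ks \<le> j}.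
            fa_prod_list
              (map (\<lambda>t. fa_mult (fa_pow (fa_gen G) i)
                          (Cs (sum_list (take t ks)) ((ks @ [j - sum_list ks]) ! t)))
                   (rev [0..<Suc n])))
   = (\<Sum>(ks, ws)\<in>Sigma {ks. length ks = n \<and> sum_list ks \<le> j} (\<lambda>ks. Pr (SS j ks) (rev [0..<Suc n])).
        Poly_Mapping.single (concat (map (\<lambda>w. replicate i G @ w) ws)) (1::'k::comm_ring_1))"
proof -
  have "(\<Sum>ks\<in>{ks. length ks = n \<and> sum_list ks \<le> j}.
            fa_prod_list
              (map (\<lambda>t. fa_mult (fa_pow (fa_gen G) i)
                          (Cs (sum_list (take t ks)) ((ks @ [j - sum_list ks]) ! t)))
                   (rev [0..<Suc n])))
     = (\<Sum>ks\<in>{ks. length ks = n \<and> sum_list ks \<le> j}. \<Sum>ws\<in>Pr (SS j ks) (rev [0..<Suc n]).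
        Poly_Mapping.single (concat (map (\<lambda>w. replicate i G @ w) ws)) (1::'k))"
  proof (rule sum.cong[OF refl])
    fix ks
    show "fa_prod_list
              (map (\<lambda>t. fa_mult (fa_pow (fa_gen G) i)
                          (Cs (sum_list (take t ks)) ((ks @ [j - sum_list ks]) ! t)))
                   (rev [0..<Suc n]))
      = (\<Sum>ws\<in>Pr (SS j ks) (rev [0..<Suc n]).
        Poly_Mapping.single (concat (map (\<lambda>w. replicate i G @ w) ws)) (1::'k))"
      unfolding gi_Cs SS_def[symmetric]
      by (rule prod_list_repr) (simp add: SS_def finite_Cset)
  qed
  also have "\<dots> = (\<Sum>(ks, ws)\<in>Sigma {ks. length ks = n \<and> sum_list ks \<le> j} (\<lambda>ks. Pr (SS j ks) (rev [0..<Suc n])).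
        Poly_Mapping.single (concat (map (\<lambda>w. replicate i G @ w) ws)) (1::'k))"
    by (rule sum.Sigma) (auto simp: finite_K finite_Pr SS_def finite_Cset)
  finally show ?thesis .
qed

definition shift :: "nat list \<Rightarrow> nat list" where
  "shift qs = map (\<lambda>p. p - 1) (filter (\<lambda>p. 0 < p) qs)"

fun fill :: "word \<Rightarrow> nat list \<Rightarrow> nat list" where
  "fill [] ys = []"
| "fill (X # w) ys = 0 # fill w ys"
| "fill (G # w) [] = 0 # fill w []"
| "fill (G # w) (y # ys) = Suc y # fill w ys"

fun dec :: "word list \<Rightarrow> nat list" where
  "dec [] = []"
| "dec (w # ws) = fill w (dec ws)"

definition wsOf :: "nat \<Rightarrow> nat list \<Rightarrow> word list" where
  "wsOf n qs = map (\<lambda>q. fac q qs) [0..<Suc n]"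

definition ksOf :: "nat \<Rightarrow> nat list \<Rightarrow> nat list" where
  "ksOf n qs = map (\<lambda>t. count_list qs (n - t)) [0..<n]"

lemma fac_Nil[simp]: "fac q [] = []" by (simp add: fac_def)
lemma fac_Cons[simp]: "fac q (p # qs) = out q X p @ fac q qs" by (simp add: fac_def)

lemma fac_Suc: "fac (Suc q) qs = fac q (shift qs)"
  by (induction qs) (auto simp: shift_def)

lemma fill_fac: "fill (fac 0 qs) (shift qs) = qs"
  by (induction qs) (auto simp: shift_def)

lemma fac_fill: "count_list w G = length ys \<Longrightarrow> fac 0 (fill w ys) = w \<and> shift (fill w ys) = ys"
  by (induction w ys rule: fill.induct) (auto simp: shift_def)

lemma length_fill: "length (fill w ys) = length w"
  by (induction w ys rule: fill.induct) auto

lemma set_fill: "set (fill w ys) \<subseteq> insert 0 (Suc ` set ys)"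
  by (induction w ys rule: fill.induct) auto

lemma set_dec: "set (dec ws) \<subseteq> {..<length ws}"
proof (induction ws)
  case (Cons w ws)
  thus ?case using set_fill[of w "dec ws"] by force
qed simp

lemma wsOf_Suc: "wsOf (Suc n) qs = fac 0 qs # wsOf n (shift qs)"
  unfolding wsOf_def by (simp only: upt_conv_Cons[of 0 "Suc (Suc n)"] map_Suc_upt[symmetric])
    (simp add: fac_Suc del: upt_Suc)

lemma dec_wsOf: "set qs \<subseteq> {..n} \<Longrightarrow> dec (wsOf n qs) = qs"
proof (induction n arbitrary: qs)
  case 0
  hence "shift qs = []" by (auto simp: shift_def filter_empty_conv)
  thus ?case using fill_fac[of qs] by (simp add: wsOf_def)
next
  case (Suc n)
  have "set (shift qs) \<subseteq> {..n}" using Suc.prems by (auto simp: shift_def)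
  thus ?case using Suc.IH fill_fac[of qs] by (simp add: wsOf_Suc)
qed

lemma length_dec: "length (dec (w # ws)) = length w"
  by (simp add: length_fill)

lemma wsOf_dec:
  "length ws = Suc n \<Longrightarrow> (\<forall>q<n. count_list (ws ! q) G = length (ws ! Suc q)) \<Longrightarrow>
   count_list (ws ! n) G = 0 \<Longrightarrow> wsOf n (dec ws) = ws"
proof (induction n arbitrary: ws)
  case 0
  then obtain w where ws: "ws = [w]" by (cases ws) auto
  thus ?case using 0 fac_fill[of w "[]"] by (simp add: wsOf_def)
next
  case (Suc n)
  then obtain w rest where ws: "ws = w # rest" by (cases ws) auto
  have lr: "length rest = Suc n" using Suc.prems ws by simp
  then obtain r0 rest' where rest: "rest = r0 # rest'" by (cases rest) auto
  have cw: "count_list w G = length (dec rest)"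
    using Suc.prems(2) ws rest by (auto simp: length_fill dest: spec[of _ 0])
  have "wsOf n (dec rest) = rest"
    by (rule Suc.IH) (use Suc.prems ws lr in \<open>auto dest: spec[of _ "Suc q" for q]\<close>)
  thus ?case using fac_fill[OF cw] ws by (simp add: wsOf_Suc)
qed

lemma count_fac_X: "count_list (fac q qs) X = count_list qs q"
  by (induction qs) auto

lemma count_fac_G: "count_list (fac q qs) G = length (filter (\<lambda>p. q < p) qs)"
  by (induction qs) auto

lemma sum_count: "finite S \<Longrightarrow> (\<Sum>p\<in>S. count_list xs p) = length (filter (\<lambda>x. x \<in> S) xs)"
proof (induction xs)
  case (Cons a xs)
  have "(\<Sum>p\<in>S. count_list (a # xs) p) = (\<Sum>p\<in>S. count_list xs p + (if a = p then 1 else 0))"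
    by (rule sum.cong) auto
  also have "\<dots> = (\<Sum>p\<in>S. count_list xs p) + (if a \<in> S then 1 else 0)"
    using Cons.prems by (simp add: sum.distrib)
  finally show ?case using Cons by simp
qed simp

lemma sum_rev_idx: "(k::nat) \<le> (n::nat) \<Longrightarrow> (\<Sum>t<k. f (n - t)) = (\<Sum>p\<in>{n - k<..n}. (f p :: nat))"
proof (induction k)
  case 0 thus ?case by simp
next
  case (Suc k)
  have e: "{n - Suc k<..n} = insert (n - k) {n - k<..n}" using Suc.prems by auto
  show ?case using Suc by (simp add: e)
qed

lemma sum_take_ksOf: "k \<le> n \<Longrightarrow> sum_list (take k (ksOf n qs)) = (\<Sum>p\<in>{n - k<..n}. count_list qs p)"
proof -
  assume k: "k \<le> n"
  have "take k (ksOf n qs) = map (\<lambda>t. count_list qs (n - t)) [0..<k]"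
    using k by (simp add: ksOf_def take_map min_def)
  hence "sum_list (take k (ksOf n qs)) = (\<Sum>t<k. count_list qs (n - t))"
    by (simp add: sum_list_map_eq_sum_count2 atLeast0LessThan[symmetric] sum_set_upt_conv_sum_list_nat[symmetric])
  thus ?thesis using sum_rev_idx[OF k] by simp
qed

lemma length_ksOf[simp]: "length (ksOf n qs) = n" by (simp add: ksOf_def)

lemma fwd_mem:
  assumes lq: "length qs = j" and sq: "set qs \<subseteq> {..n}"
  shows "(ksOf n qs, wsOf n qs) \<in> Sigma {ks. length ks = n \<and> sum_list ks \<le> j} (\<lambda>ks. Pr (SS j ks) (rev [0..<Suc n]))"
proof -
  have flt: "length (filter (\<lambda>p. q < p) qs) = (\<Sum>p\<in>{q<..n}. count_list qs p)" for q
  proof -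
    have "filter (\<lambda>p. q < p) qs = filter (\<lambda>x. x \<in> {q<..n}) qs"
      by (rule filter_cong) (use sq in auto)
    thus ?thesis by (simp add: sum_count)
  qed
  have jsum: "j = count_list qs 0 + (\<Sum>p\<in>{0<..n}. count_list qs p)"
  proof -
    have "filter (\<lambda>x. x \<in> {..n}) qs = qs" using sq by (auto simp: filter_id_conv)
    hence "j = (\<Sum>p\<in>{..n}. count_list qs p)" using lq by (simp add: sum_count)
    also have "{..n} = insert 0 {0<..n}" by auto
    finally show ?thesis by simp
  qed
  have sk: "sum_list (ksOf n qs) = (\<Sum>p\<in>{0<..n}. count_list qs p)"
    using sum_take_ksOf[of n n qs] by simp
  have "sum_list (ksOf n qs) \<le> j" using sk jsum by simp
  moreover have "wsOf n qs \<in> Pr (SS j (ksOf n qs)) (rev [0..<Suc n])"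
    unfolding Pr_char
  proof (intro conjI allI impI)
    show "length (wsOf n qs) = length (rev [0..<Suc n])" by (simp add: wsOf_def)
    fix q assume q: "q < length (rev [0..<Suc n])"
    hence q': "q \<le> n" by simp
    have r: "rev [0..<Suc n] ! q = n - q" using q' by (simp add: rev_nth del: upt_Suc)
    have w: "wsOf n qs ! q = fac q qs" using q' by (simp add: wsOf_def del: upt_Suc)
    have cG: "count_list (fac q qs) G = sum_list (take (n - q) (ksOf n qs))"
      using sum_take_ksOf[of "n - q" n qs] q' by (simp add: count_fac_G flt)
    have cX: "count_list (fac q qs) X = (ksOf n qs @ [j - sum_list (ksOf n qs)]) ! (n - q)"
    proof (cases "q = 0")
      case True thus ?thesis using sk jsum by (simp add: count_fac_X nth_append)
    next
      case False thus ?thesis using q' by (simp add: count_fac_X nth_append ksOf_def)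
    qed
    show "wsOf n qs ! q \<in> SS j (ksOf n qs) (rev [0..<Suc n] ! q)"
      unfolding r w SS_def Cset_def using cG cX by simp
  qed
  ultimately show ?thesis by simp
qed

lemma bwd:
  assumes mem: "(ks, ws) \<in> Sigma {ks. length ks = n \<and> sum_list ks \<le> j} (\<lambda>ks. Pr (SS j ks) (rev [0..<Suc n]))"
  shows "wsOf n (dec ws) = ws" "length (dec ws) = j" "set (dec ws) \<subseteq> {..n}" "ksOf n (dec ws) = ks"
proof -
  have lk: "length ks = n" and sk: "sum_list ks \<le> j" and lw: "length ws = Suc n"
    and wq: "\<And>q. q \<le> n \<Longrightarrow> ws ! q \<in> SS j ks (n - q)"
    using mem by (auto simp: Pr_char rev_nth simp del: upt_Suc)
  have cG: "count_list (ws ! q) G = sum_list (take (n - q) ks)" if "q \<le> n" for q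
    using wq[OF that] by (simp add: SS_def Cset_def)
  have cX: "count_list (ws ! q) X = (ks @ [j - sum_list ks]) ! (n - q)" if "q \<le> n" for q
    using wq[OF that] by (simp add: SS_def Cset_def)
  have chain: "\<forall>q<n. count_list (ws ! q) G = length (ws ! Suc q)"
  proof (intro allI impI)
    fix q assume q: "q < n"
    have e: "n - q = Suc (n - Suc q)" using q by simp
    have "length (ws ! Suc q) = sum_list (take (n - Suc q) ks) + ks ! (n - Suc q)"
      using cG[of "Suc q"] cX[of "Suc q"] q lk by (simp add: length_count nth_append)
    also have "\<dots> = sum_list (take (n - q) ks)"
      unfolding e using lk q by (simp add: take_Suc_conv_app_nth)
    finally show "count_list (ws ! q) G = length (ws ! Suc q)" using cG[of q] q by simp
  qed
  show W: "wsOf n (dec ws) = ws"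
    by (rule wsOf_dec[OF lw chain]) (use cG[of n] in simp)
  obtain w0 rest where ws: "ws = w0 # rest" using lw by (cases ws) auto
  have "length (dec ws) = length (ws ! 0)" using ws by (simp add: length_fill)
  also have "\<dots> = j"
    using cG[of 0] cX[of 0] lk sk by (simp add: length_count nth_append)
  finally show "length (dec ws) = j" .
  show "set (dec ws) \<subseteq> {..n}" using set_dec[of ws] lw by auto
  show "ksOf n (dec ws) = ks"
  proof (rule nth_equalityI)
    show "length (ksOf n (dec ws)) = length ks" using lk by simp
    fix t assume t: "t < length (ksOf n (dec ws))"
    hence t': "t < n" by simp
    have "count_list (dec ws) (n - t) = count_list (fac (n - t) (dec ws)) X" by (simp add: count_fac_X)
    also have "fac (n - t) (dec ws) = ws ! (n - t)"
      using arg_cong[OF W, of "\<lambda>l. l ! (n - t)"] t' nth_upt[of 0 "n - t" "Suc n"]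
      by (simp add: wsOf_def del: upt_Suc)
    finally show "ksOf n (dec ws) ! t = ks ! t"
      using cX[of "n - t"] t' lk by (simp add: ksOf_def nth_append)
  qed
qed

theorem lemma2p11:
  fixes i j n :: nat
  assumes "n \<ge> 1"
  shows "sweedler (n + 1)
           (fa_mult (fa_pow (fa_gen G) i) (fa_pow (fa_gen X) j) :: 'k::field fa)
       = (\<Sum>ks\<in>{ks. length ks = n \<and> sum_list ks \<le> j}.
            fa_prod_list
              (map (\<lambda>t. fa_mult (fa_pow (fa_gen G) i)
                          (Cs (sum_list (take t ks)) ((ks @ [j - sum_list ks]) ! t)))
                   (rev [0..<n + 1])))"
proof -
  have "sweedler (n + 1) (fa_mult (fa_pow (fa_gen G) i) (fa_pow (fa_gen X) j) :: 'k fa)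
     = (\<Sum>qs\<in>{qs. length qs = j \<and> set qs \<subseteq> {..n}}.
        Poly_Mapping.single (concat (map (\<lambda>q. replicate i G @ fac q qs) [0..<Suc n])) 1)"
    using LHS[of n i j] by simp
  also have "\<dots> = (\<Sum>(ks, ws)\<in>Sigma {ks. length ks = n \<and> sum_list ks \<le> j} (\<lambda>ks. Pr (SS j ks) (rev [0..<Suc n])).
        Poly_Mapping.single (concat (map (\<lambda>w. replicate i G @ w) ws)) (1::'k))"
  proof (rule sum.reindex_bij_witness[where j="\<lambda>qs. (ksOf n qs, wsOf n qs)" and i="\<lambda>(ks, ws). dec ws"])
    fix qs assume "qs \<in> {qs. length qs = j \<and> set qs \<subseteq> {..n}}"
    hence lq: "length qs = j" and sq: "set qs \<subseteq> {..n}" by auto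
    show "(\<lambda>(ks, ws). dec ws) (ksOf n qs, wsOf n qs) = qs" using dec_wsOf[OF sq] by simp
    show "(ksOf n qs, wsOf n qs) \<in> Sigma {ks. length ks = n \<and> sum_list ks \<le> j} (\<lambda>ks. Pr (SS j ks) (rev [0..<Suc n]))"
      by (rule fwd_mem[OF lq sq])
    show "(\<lambda>(ks, ws). Poly_Mapping.single (concat (map (\<lambda>w. replicate i G @ w) ws)) (1::'k)) (ksOf n qs, wsOf n qs)
        = Poly_Mapping.single (concat (map (\<lambda>q. replicate i G @ fac q qs) [0..<Suc n])) 1"
      by (simp add: wsOf_def o_def del: upt_Suc)
  next
    fix x assume x: "x \<in> Sigma {ks. length ks = n \<and> sum_list ks \<le> j} (\<lambda>ks. Pr (SS j ks) (rev [0..<Suc n]))"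
    obtain ks ws where xe: "x = (ks, ws)" by (cases x)
    note b = bwd[OF x[unfolded xe]]
    show "(\<lambda>qs. (ksOf n qs, wsOf n qs)) ((\<lambda>(ks, ws). dec ws) x) = x" using b xe by simp
    show "(\<lambda>(ks, ws). dec ws) x \<in> {qs. length qs = j \<and> set qs \<subseteq> {..n}}" using b xe by simp
  qed
  also have "\<dots> = (\<Sum>ks\<in>{ks. length ks = n \<and> sum_list ks \<le> j}.
            fa_prod_list
              (map (\<lambda>t. fa_mult (fa_pow (fa_gen G) i)
                          (Cs (sum_list (take t ks)) ((ks @ [j - sum_list ks]) ! t)))
                   (rev [0..<Suc n])))"
    by (rule RHS[symmetric])
  finally show ?thesis by simp
qed

end
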